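(* $f_3(5,4)=\frac{16}{7}=\rho_3(G^* )$, where $G^*$ is the $7$-vertex graph obtained from $K_6$ by deleting the two edges of a matching $\{wx,yz\}$ and adding a new vertex adjacent exactly to $w,x,y,z$.
   Context: $\mathcal{G}(\Delta,\omega)$ denotes the class of finite simple graphs $G$ with maximum degree $\Delta(G)\le\Delta$ and clique number $\omega(G)\le\omega$. $k_t(G)$ is the number of copies of $K_t$ in $G$ and $\rho_t(G)=k_t(G)/|V(G)|$. $f_t(\Delta,\omega)=\sup\{\rho_t(G): G\in\mathcal{G}(\Delta,\omega),\ |V(G)|\ge 1\}$. *)

theory Defs
  imports Complex_Main
begin

(* A finite simple graph on vertex set V with edge set E (edges are 2-element subsets of V).
   Vertices are taken from nat: every finite graph is isomorphic to one on nat vertices. *)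
definition simple_graph :: "nat set \<Rightarrow> nat set set \<Rightarrow> bool" where
  "simple_graph V E \<longleftrightarrow> finite V \<and> (\<forall>e\<in>E. e \<subseteq> V \<and> card e = 2)"

definition degree :: "nat set \<Rightarrow> nat set set \<Rightarrow> nat \<Rightarrow> nat" where
  "degree V E v = card {u \<in> V. {u, v} \<in> E}"

definition max_degree_le :: "nat set \<Rightarrow> nat set set \<Rightarrow> nat \<Rightarrow> bool" where
  "max_degree_le V E d \<longleftrightarrow> (\<forall>v\<in>V. degree V E v \<le> d)"

definition is_clique :: "nat set \<Rightarrow> nat set set \<Rightarrow> nat set \<Rightarrow> bool" where
  "is_clique V E S \<longleftrightarrow> S \<subseteq> V \<and> (\<forall>u\<in>S. \<forall>v\<in>S. u \<noteq> v \<longrightarrow> {u, v} \<in> E)"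

definition clique_number_le :: "nat set \<Rightarrow> nat set set \<Rightarrow> nat \<Rightarrow> bool" where
  "clique_number_le V E w \<longleftrightarrow> (\<forall>S. is_clique V E S \<longrightarrow> card S \<le> w)"

definition graph_class :: "nat \<Rightarrow> nat \<Rightarrow> nat set \<Rightarrow> nat set set \<Rightarrow> bool" where
  "graph_class D w V E \<longleftrightarrow> simple_graph V E \<and> max_degree_le V E D \<and> clique_number_le V E w"

definition k_count :: "nat \<Rightarrow> nat set \<Rightarrow> nat set set \<Rightarrow> nat" where
  "k_count t V E = card {S. is_clique V E S \<and> card S = t}"

definition rho :: "nat \<Rightarrow> nat set \<Rightarrow> nat set set \<Rightarrow> real" where
  "rho t V E = real (k_count t V E) / real (card V)"

definition f_sup :: "nat \<Rightarrow> nat \<Rightarrow> nat \<Rightarrow> real" where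
  "f_sup t D w = Sup {rho t V E | V E. graph_class D w V E \<and> card V \<ge> 1}"

definition Gstar_V :: "nat set" where
  "Gstar_V = {0..6}"

definition Gstar_E :: "nat set set" where
  "Gstar_E = {{u, v} | u v. u \<in> {0..5} \<and> v \<in> {0..5} \<and> u \<noteq> v
                \<and> {u, v} \<noteq> {0, 1} \<and> {u, v} \<noteq> {2, 3}}
             \<union> {{6, u} | u. u \<in> {0, 1, 2, 3}}"

end

theory Submission
  imports Defs
begin

lemma list_of_card:
  assumes "finite S" "card S = n"
  shows "\<exists>xs. distinct xs \<and> set xs = S \<and> length xs = n"
proof -
  obtain xs where "set xs = S" "distinct xs" using finite_distinct_list[OF assms(1)] by blast
  thus ?thesis using distinct_card[of xs] assms by auto
qed
lemma card5E:
  assumes "finite S" "card S = 5"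
  obtains a b c d e where "distinct [a,b,c,d,e]" "S = {a,b,c,d,e}"
proof -
  obtain xs where xs: "distinct xs" "set xs = S" "length xs = 5" using list_of_card assms by blast
  have "\<exists>a b c d e. xs = [a,b,c,d,e]" using \<open>length xs = 5\<close>
    apply (cases xs, simp)
    apply (rename_tac a l, case_tac l, simp)
    apply (rename_tac b l, case_tac l, simp)
    apply (rename_tac c l, case_tac l, simp)
    apply (rename_tac d l, case_tac l, simp)
    apply (rename_tac e l, case_tac l, simp)
    apply simp
    done
  then obtain a b c d e where "xs = [a,b,c,d,e]" by blast
  show ?thesis by (rule that) (use xs \<open>xs = _\<close> in auto)
qed
lemma card4E:
  assumes "finite S" "card S = 4"
  obtains a b c d where "distinct [a,b,c,d]" "S = {a,b,c,d}"
proof -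
  obtain xs where xs: "distinct xs" "set xs = S" "length xs = 4" using list_of_card assms by blast
  have "\<exists>a b c d. xs = [a,b,c,d]" using \<open>length xs = 4\<close>
    apply (cases xs, simp)
    apply (rename_tac a l, case_tac l, simp)
    apply (rename_tac b l, case_tac l, simp)
    apply (rename_tac c l, case_tac l, simp)
    apply (rename_tac d l, case_tac l, simp)
    apply simp
    done
  then obtain a b c d where "xs = [a,b,c,d]" by blast
  show ?thesis by (rule that) (use xs \<open>xs = _\<close> in auto)
qed

lemma tf4:
  fixes ab ac ad bc bd cd :: bool
  assumes "\<not>(ab \<and> ac \<and> bc)" "\<not>(ab \<and> ad \<and> bd)" "\<not>(ac \<and> ad \<and> cd)" "\<not>(bc \<and> bd \<and> cd)"
  shows "(if ab then 1 else 0) + (if ac then 1 else 0) + (if ad then 1 else 0) + (if bc then 1 else 0) + (if bd then 1 else 0) + (if cd then 1 else 0) \<le> (4::nat)"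
  using assms
  by (cases ab; cases ac; cases ad; cases bc; cases bd; cases cd; simp)
lemma tf4eq:
  fixes ab ac ad bc bd cd :: bool
  assumes "\<not>(ab \<and> ac \<and> bc)" "\<not>(ab \<and> ad \<and> bd)" "\<not>(ac \<and> ad \<and> cd)" "\<not>(bc \<and> bd \<and> cd)"
   "(if ab then 1 else 0) + (if ac then 1 else 0) + (if ad then 1 else 0) + (if bc then 1 else 0) + (if bd then 1 else 0) + (if cd then 1 else 0) = (4::nat)"
  shows "(\<not>ab \<and> \<not>cd \<and> ac \<and> ad \<and> bc \<and> bd) \<or> (\<not>ac \<and> \<not>bd \<and> ab \<and> ad \<and> bc \<and> cd) \<or> (\<not>ad \<and> \<not>bc \<and> ab \<and> ac \<and> bd \<and> cd)"
  using assms
  by (cases ab; cases ac; cases ad; cases bc; cases bd; cases cd; simp)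
locale sg =
  fixes V :: "nat set" and E :: "nat set set"
  assumes gc: "graph_class 5 4 V E"
begin

definition adj :: "nat \<Rightarrow> nat \<Rightarrow> bool" where "adj u v \<longleftrightarrow> {u,v} \<in> E"
definition N :: "nat \<Rightarrow> nat set" where "N v = {u \<in> V. adj u v}"
definition ep :: "nat \<Rightarrow> nat" where
  "ep v = card {(a,b). a \<in> N v \<and> b \<in> N v \<and> adj a b}"

lemma finV: "finite V" using gc by (simp add: graph_class_def simple_graph_def)

lemma adj_sym: "adj u v = adj v u" by (simp add: adj_def insert_commute)

lemma adj_V: "adj u v \<Longrightarrow> u \<in> V \<and> v \<in> V"
  using gc unfolding adj_def graph_class_def simple_graph_def by blast

lemma adj_irr: "\<not> adj u u"
proof
  assume "adj u u"
  hence "card {u,u} = 2" using gc unfolding adj_def graph_class_def simple_graph_def by blast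
  thus False by simp
qed

lemma adj_ne: "adj u v \<Longrightarrow> u \<noteq> v" using adj_irr by blast

lemma inN: "u \<in> N v \<longleftrightarrow> adj u v" using adj_V by (auto simp: N_def)

lemma finN: "finite (N v)" using finV by (simp add: N_def)

lemma degN: "card (N v) \<le> 5"
proof (cases "v \<in> V")
  case True
  thus ?thesis using gc unfolding graph_class_def max_degree_le_def degree_def N_def adj_def by blast
next
  case False
  hence "N v = {}" using adj_V by (auto simp: N_def)
  thus ?thesis by simp
qed

lemma noK5:
  assumes "adj a b" "adj a c" "adj a d" "adj a e" "adj b c" "adj b d" "adj b e"
    "adj c d" "adj c e" "adj d e"
  shows False
proof -
  have d: "distinct [a,b,c,d,e]" using assms adj_ne by auto
  have "is_clique V E {a,b,c,d,e}"
    unfolding is_clique_def using assms adj_V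
    by (auto simp: adj_def insert_commute)
  hence "card {a,b,c,d,e} \<le> 4" using gc unfolding graph_class_def clique_number_le_def by blast
  thus False using d by simp
qed

lemma ep_sum: "ep v = (\<Sum>a\<in>N v. card (N a \<inter> N v))"
proof -
  have "{(a,b). a \<in> N v \<and> b \<in> N v \<and> adj a b} = Sigma (N v) (\<lambda>a. N a \<inter> N v)"
    by (auto simp: inN adj_sym)
  thus ?thesis unfolding ep_def using finN by simp
qed

lemma cardN_list: "distinct xs \<Longrightarrow> card (N u \<inter> set xs) = (\<Sum>z\<leftarrow>xs. if adj u z then 1 else 0)"
proof (induction xs)
  case Nil thus ?case by simp
next
  case (Cons x xs)
  have "N u \<inter> set (x#xs) = (if adj u x then insert x (N u \<inter> set xs) else N u \<inter> set xs)"
    by (auto simp: inN adj_sym)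
  thus ?case using Cons finN by auto
qed

lemma sum_set_list: "distinct xs \<Longrightarrow> (\<Sum>a\<in>set xs. f a) = (\<Sum>a\<leftarrow>xs. f a)"
  by (simp add: sum_list_distinct_conv_sum_set)

lemma ep_list:
  assumes "N v = set xs" "distinct xs"
  shows "ep v = (\<Sum>a\<leftarrow>xs. \<Sum>z\<leftarrow>xs. if adj a z then 1 else 0)"
proof -
  have "ep v = (\<Sum>a\<in>set xs. card (N a \<inter> set xs))" using ep_sum assms by simp
  also have "\<dots> = (\<Sum>a\<leftarrow>xs. card (N a \<inter> set xs))" using assms sum_set_list by blast
  also have "\<dots> = (\<Sum>a\<leftarrow>xs. \<Sum>z\<leftarrow>xs. if adj a z then 1 else 0)"
    using cardN_list[OF assms(2)] by simp
  finally show ?thesis .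
qed


definition ec :: "nat set \<Rightarrow> nat" where
  "ec S = card {(a,b). a \<in> S \<and> b \<in> S \<and> adj a b}"

lemma ep_ec: "ep v = ec (N v)" by (simp add: ep_def ec_def)

lemma ec_sum: "finite S \<Longrightarrow> ec S = (\<Sum>a\<in>S. card (N a \<inter> S))"
proof -
  assume f: "finite S"
  have "{(a,b). a \<in> S \<and> b \<in> S \<and> adj a b} = Sigma S (\<lambda>a. N a \<inter> S)"
    by (auto simp: inN adj_sym)
  thus ?thesis unfolding ec_def using f by simp
qed

lemma cross_sym:
  assumes "finite A" "finite X"
  shows "(\<Sum>u\<in>X. card (N u \<inter> A)) = (\<Sum>a\<in>A. card (N a \<inter> X))"
proof -
  have "(\<Sum>u\<in>X. card (N u \<inter> A)) = card (Sigma X (\<lambda>u. N u \<inter> A))" using assms by simp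
  also have "\<dots> = card ((\<lambda>(a,u). (u,a)) ` Sigma A (\<lambda>a. N a \<inter> X))"
    by (rule arg_cong[where f=card]) (auto simp: inN adj_sym image_iff)
  also have "\<dots> = card (Sigma A (\<lambda>a. N a \<inter> X))"
    by (rule card_image) (auto simp: inj_on_def)
  also have "\<dots> = (\<Sum>a\<in>A. card (N a \<inter> X))" using assms by simp
  finally show ?thesis .
qed

lemma ec_split:
  assumes "distinct as" "finite X" "set as \<inter> X = {}"
  shows "ec (set as \<union> X) = (\<Sum>a\<leftarrow>as. \<Sum>z\<leftarrow>as. if adj a z then 1 else 0)
            + 2 * (\<Sum>a\<leftarrow>as. card (N a \<inter> X)) + ec X"
proof -
  let ?A = "set as"
  have fA: "finite ?A" by simp
  have int: "\<And>u. N u \<inter> (?A \<union> X) = (N u \<inter> ?A) \<union> (N u \<inter> X)" by auto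
  have cu: "card (N u \<inter> (?A \<union> X)) = card (N u \<inter> ?A) + card (N u \<inter> X)" for u
  proof -
    have "card (N u \<inter> ?A \<union> N u \<inter> X) = card (N u \<inter> ?A) + card (N u \<inter> X)"
      by (rule card_Un_disjoint) (use assms finN in auto)
    thus ?thesis by (simp add: int)
  qed
  have "ec (?A \<union> X) = (\<Sum>u\<in>?A \<union> X. card (N u \<inter> (?A \<union> X)))"
    using ec_sum assms by simp
  also have "\<dots> = (\<Sum>u\<in>?A. card (N u \<inter> (?A \<union> X))) + (\<Sum>u\<in>X. card (N u \<inter> (?A \<union> X)))"
    using assms by (simp add: sum.union_disjoint)
  also have "\<dots> = (\<Sum>u\<in>?A. card (N u \<inter> ?A)) + (\<Sum>u\<in>?A. card (N u \<inter> X))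
       + ((\<Sum>u\<in>X. card (N u \<inter> ?A)) + (\<Sum>u\<in>X. card (N u \<inter> X)))"
    by (simp add: cu sum.distrib)
  also have "(\<Sum>u\<in>X. card (N u \<inter> ?A)) = (\<Sum>u\<in>?A. card (N u \<inter> X))"
    using cross_sym assms by simp
  also have "(\<Sum>u\<in>X. card (N u \<inter> X)) = ec X" using ec_sum assms by simp
  also have "(\<Sum>u\<in>?A. card (N u \<inter> ?A)) = (\<Sum>a\<leftarrow>as. \<Sum>z\<leftarrow>as. if adj a z then 1 else 0)"
    using assms(1) cardN_list sum_set_list by simp
  also have "(\<Sum>u\<in>?A. card (N u \<inter> X)) = (\<Sum>a\<leftarrow>as. card (N a \<inter> X))"
    using assms(1) sum_set_list by blast
  finally show ?thesis by simp
qed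

lemma ec_bound: "finite X \<Longrightarrow> ec X \<le> card X * (card X - 1)"
proof -
  assume f: "finite X"
  have "ec X = (\<Sum>u\<in>X. card (N u \<inter> X))" using ec_sum f by simp
  also have "\<dots> \<le> (\<Sum>u\<in>X. card X - 1)"
  proof (rule sum_mono)
    fix u assume "u \<in> X"
    have "N u \<inter> X \<subseteq> X - {u}" using adj_irr by (auto simp: inN)
    hence "card (N u \<inter> X) \<le> card (X - {u})" using f by (simp add: card_mono)
    thus "card (N u \<inter> X) \<le> card X - 1" using \<open>u \<in> X\<close> f by simp
  qed
  also have "\<dots> = card X * (card X - 1)" by simp
  finally show ?thesis .
qed

lemma ec_even: "finite S \<Longrightarrow> even (ec S)"
proof -
  assume f: "finite S"
  let ?P = "{(a,b). a \<in> S \<and> b \<in> S \<and> adj a b}"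
  let ?L = "{(a,b). a \<in> S \<and> b \<in> S \<and> adj a b \<and> a < b}"
  let ?G = "{(a,b). a \<in> S \<and> b \<in> S \<and> adj a b \<and> b < a}"
  have fP: "finite ?P" by (rule finite_subset[of _ "S \<times> S"]) (auto simp: f)
  have "?P = ?L \<union> ?G" using adj_ne by (auto simp: linorder_neq_iff)
  moreover have "?L \<inter> ?G = {}" by auto
  moreover have "finite ?L" "finite ?G" by (rule finite_subset[OF _ fP], auto)+
  ultimately have "card ?P = card ?L + card ?G" by (simp add: card_Un_disjoint)
  moreover have "?G = (\<lambda>(a,b). (b,a)) ` ?L" by (auto simp: adj_sym image_iff)
  moreover have "card ((\<lambda>(a,b). (b,a)) ` ?L) = card ?L" by (rule card_image) (auto simp: inj_on_def)
  ultimately have "card ?P = 2 * card ?L" by simp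
  thus ?thesis unfolding ec_def by simp
qed


lemma adjI: "x \<in> N v \<Longrightarrow> adj v x" using inN adj_sym by blast
lemma adjI': "x \<in> N v \<Longrightarrow> adj x v" using inN by blast

lemma dv_le: "u \<in> N v \<Longrightarrow> card (N u \<inter> N v) \<le> card (N v) - 1"
proof -
  assume u: "u \<in> N v"
  have "N u \<inter> N v \<subseteq> N v - {u}" using adj_irr by (auto simp: inN)
  hence "card (N u \<inter> N v) \<le> card (N v - {u})" using finN by (simp add: card_mono)
  thus ?thesis using u finN by simp
qed

lemma ep_small: "card (N v) \<le> 4 \<Longrightarrow> ep v \<le> 12"
proof -
  assume d: "card (N v) \<le> 4"
  have "ep v \<le> card (N v) * (card (N v) - 1)" using ec_bound finN ep_ec by simp
  also have "\<dots> \<le> 4 * 3" using d by (intro mult_mono) auto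
  finally show ?thesis by simp
qed

lemma N_eq: "S \<subseteq> N v \<Longrightarrow> finite S \<Longrightarrow> card S = 5 \<Longrightarrow> N v = S"
  using degN finN by (metis card_seteq)

lemma ep5: "ep v \<ge> 13 \<Longrightarrow> card (N v) = 5"
proof (rule ccontr)
  assume "ep v \<ge> 13" "card (N v) \<noteq> 5"
  hence "card (N v) \<le> 4" using degN[of v] by simp
  thus False using ep_small \<open>ep v \<ge> 13\<close> by fastforce
qed

lemma ep_le_sum3:
  assumes "card (N v) = 5" "\<forall>u\<in>N v. card (N u \<inter> N v) \<le> 3"
  shows "ep v \<le> 15"
proof -
  have "ep v \<le> (\<Sum>u\<in>N v. 3)" unfolding ep_sum by (rule sum_mono) (use assms in auto)
  thus ?thesis using assms by simp
qed

lemma univ_vertex: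
  assumes "ep w \<ge> 16"
  obtains c where "c \<in> N w" "card (N c \<inter> N w) = 4"
proof -
  have d5: "card (N w) = 5" using ep5 assms by simp
  have "\<exists>c\<in>N w. card (N c \<inter> N w) = 4"
  proof (rule ccontr)
    assume nc: "\<not> (\<exists>c\<in>N w. card (N c \<inter> N w) = 4)"
    have "\<forall>u\<in>N w. card (N u \<inter> N w) \<le> 3"
    proof
      fix u assume u: "u \<in> N w"
      have "card (N u \<inter> N w) \<le> 4" using dv_le[OF u] d5 by simp
      thus "card (N u \<inter> N w) \<le> 3" using nc u by fastforce
    qed
    thus False using ep_le_sum3 d5 assms by fastforce
  qed
  thus ?thesis using that by blast
qed

lemma univ_struct:
  assumes d5: "card (N w) = 5" and c: "c \<in> N w" "card (N c \<inter> N w) = 4"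
  obtains p1 p2 p3 p4 where "distinct [w,c,p1,p2,p3,p4]" "N w = {c,p1,p2,p3,p4}"
    "adj w c" "adj w p1" "adj w p2" "adj w p3" "adj w p4"
    "adj c p1" "adj c p2" "adj c p3" "adj c p4"
    "ep w = 8 + 2 * ((if adj p1 p2 then 1 else 0) + (if adj p1 p3 then 1 else 0) + (if adj p1 p4 then 1 else 0)
       + (if adj p2 p3 then 1 else 0) + (if adj p2 p4 then 1 else 0) + (if adj p3 p4 then 1 else 0))"
    "\<not>(adj p1 p2 \<and> adj p1 p3 \<and> adj p2 p3)" "\<not>(adj p1 p2 \<and> adj p1 p4 \<and> adj p2 p4)"
    "\<not>(adj p1 p3 \<and> adj p1 p4 \<and> adj p3 p4)" "\<not>(adj p2 p3 \<and> adj p2 p4 \<and> adj p3 p4)"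
proof -
  have sub: "N c \<inter> N w \<subseteq> N w - {c}" using adj_irr by (auto simp: inN)
  have "card (N w - {c}) = 4" using d5 c finN by simp
  hence eq: "N c \<inter> N w = N w - {c}" using sub c(2) finN by (metis card_subset_eq finite_Diff)
  obtain p1 p2 p3 p4 where ps: "distinct [p1,p2,p3,p4]" "N w - {c} = {p1,p2,p3,p4}"
    using card4E \<open>card (N w - {c}) = 4\<close> finN by (metis finite_Diff)
  have Nw: "N w = {c,p1,p2,p3,p4}" using ps c by auto
  have cp: "c \<noteq> p1" "c \<noteq> p2" "c \<noteq> p3" "c \<noteq> p4" using ps by auto
  have inw: "x \<in> N w" if "x \<in> {c,p1,p2,p3,p4}" for x using Nw that by simp
  have wa: "adj w c" "adj w p1" "adj w p2" "adj w p3" "adj w p4"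
    by (rule adjI, rule inw, simp)+
  have inc: "x \<in> N c" if "x \<in> {p1,p2,p3,p4}" for x using eq ps that by blast
  have ca: "adj c p1" "adj c p2" "adj c p3" "adj c p4" by (rule adjI, rule inc, simp)+
  have dist: "distinct [w,c,p1,p2,p3,p4]" using ps cp wa adj_ne by auto
  have "ep w = (\<Sum>a\<leftarrow>[c,p1,p2,p3,p4]. \<Sum>z\<leftarrow>[c,p1,p2,p3,p4]. if adj a z then 1 else 0)"
    using ep_list[of w "[c,p1,p2,p3,p4]"] Nw dist by simp
  hence epw: "ep w = 8 + 2 * ((if adj p1 p2 then 1 else 0) + (if adj p1 p3 then 1 else 0) + (if adj p1 p4 then 1 else 0)
       + (if adj p2 p3 then 1 else 0) + (if adj p2 p4 then 1 else 0) + (if adj p3 p4 then 1 else 0))"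
    using ca adj_irr adj_sym[of p1 c] adj_sym[of p2 c] adj_sym[of p3 c] adj_sym[of p4 c]
      adj_sym[of p2 p1] adj_sym[of p3 p1] adj_sym[of p4 p1] adj_sym[of p3 p2] adj_sym[of p4 p2] adj_sym[of p4 p3]
    by simp
  have tf: "\<not>(adj x y \<and> adj x z \<and> adj y z)" if "x \<in> {p1,p2,p3,p4}" "y \<in> {p1,p2,p3,p4}" "z \<in> {p1,p2,p3,p4}" for x y z
  proof
    assume a: "adj x y \<and> adj x z \<and> adj y z"
    have "adj w x" "adj w y" "adj w z" "adj c x" "adj c y" "adj c z" using that wa ca by auto
    thus False using noK5[of w c x y z] wa a by blast
  qed
  show ?thesis
    apply (rule that[OF dist Nw wa ca epw])
    using tf by auto
qed

definition block :: "nat \<Rightarrow> nat \<Rightarrow> nat \<Rightarrow> nat \<Rightarrow> nat \<Rightarrow> nat \<Rightarrow> bool" where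
  "block w c a a' b b' \<longleftrightarrow> distinct [w,c,a,a',b,b'] \<and> N w = {c,a,a',b,b'} \<and> N c = {w,a,a',b,b'}
     \<and> adj a b \<and> adj a b' \<and> adj a' b \<and> adj a' b' \<and> \<not> adj a a' \<and> \<not> adj b b'"

lemma S8:
  assumes "ep w = 16"
  obtains c a a' b b' where "block w c a a' b b'"
proof -
  have d5: "card (N w) = 5" using ep5 assms by simp
  have "ep w \<ge> 16" using assms by simp
  then obtain c where c: "c \<in> N w" "card (N c \<inter> N w) = 4" using univ_vertex by blast
  obtain p1 p2 p3 p4 where P: "distinct [w,c,p1,p2,p3,p4]" "N w = {c,p1,p2,p3,p4}"
    "adj w c" "adj w p1" "adj w p2" "adj w p3" "adj w p4"
    "adj c p1" "adj c p2" "adj c p3" "adj c p4"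
    "ep w = 8 + 2 * ((if adj p1 p2 then 1 else 0) + (if adj p1 p3 then 1 else 0) + (if adj p1 p4 then 1 else 0)
       + (if adj p2 p3 then 1 else 0) + (if adj p2 p4 then 1 else 0) + (if adj p3 p4 then 1 else 0))"
    "\<not>(adj p1 p2 \<and> adj p1 p3 \<and> adj p2 p3)" "\<not>(adj p1 p2 \<and> adj p1 p4 \<and> adj p2 p4)"
    "\<not>(adj p1 p3 \<and> adj p1 p4 \<and> adj p3 p4)" "\<not>(adj p2 p3 \<and> adj p2 p4 \<and> adj p3 p4)"
    using univ_struct[OF d5 c] by blast
  have s4: "(if adj p1 p2 then 1 else 0) + (if adj p1 p3 then 1 else 0) + (if adj p1 p4 then 1 else 0)
       + (if adj p2 p3 then 1 else 0) + (if adj p2 p4 then 1 else 0) + (if adj p3 p4 then 1 else (0::nat)) = 4"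
    using P(12) assms by simp
  have Nc: "N c = {w,p1,p2,p3,p4}"
    by (rule N_eq) (use P in \<open>auto simp: inN adj_sym\<close>)
  have cases: "(\<not>adj p1 p2 \<and> \<not>adj p3 p4 \<and> adj p1 p3 \<and> adj p1 p4 \<and> adj p2 p3 \<and> adj p2 p4) \<or>
      (\<not>adj p1 p3 \<and> \<not>adj p2 p4 \<and> adj p1 p2 \<and> adj p1 p4 \<and> adj p2 p3 \<and> adj p3 p4) \<or>
      (\<not>adj p1 p4 \<and> \<not>adj p2 p3 \<and> adj p1 p2 \<and> adj p1 p3 \<and> adj p2 p4 \<and> adj p3 p4)"
    by (rule tf4eq[OF P(13-16) s4])
  show ?thesis
  proof -
    { assume h: "\<not>adj p1 p2 \<and> \<not>adj p3 p4 \<and> adj p1 p3 \<and> adj p1 p4 \<and> adj p2 p3 \<and> adj p2 p4"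
      have "block w c p1 p2 p3 p4" unfolding block_def using P Nc h by auto
      hence ?thesis using that by blast }
    moreover
    { assume h: "\<not>adj p1 p3 \<and> \<not>adj p2 p4 \<and> adj p1 p2 \<and> adj p1 p4 \<and> adj p2 p3 \<and> adj p3 p4"
      have "block w c p1 p3 p2 p4" unfolding block_def using P Nc h by (auto simp: adj_sym insert_commute)
      hence ?thesis using that by blast }
    moreover
    { assume h: "\<not>adj p1 p4 \<and> \<not>adj p2 p3 \<and> adj p1 p2 \<and> adj p1 p3 \<and> adj p2 p4 \<and> adj p3 p4"
      have "block w c p1 p4 p2 p3" unfolding block_def using P Nc h by (auto simp: adj_sym insert_commute)
      hence ?thesis using that by blast }
    ultimately show ?thesis using cases by blast
  qed
qed


lemma block_sym:
  assumes "block w c a a' b b'"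
  shows "block c w a a' b b'" "block w c a' a b b'" "block w c a a' b' b" "block w c b b' a a'"
  using assms unfolding block_def by (auto simp: adj_sym insert_commute)

lemma block_adj:
  assumes "block w c a a' b b'"
  shows "adj w c" "adj w a" "adj w a'" "adj w b" "adj w b'" "adj c a" "adj c a'" "adj c b" "adj c b'"
    "adj a b" "adj a b'" "adj a' b" "adj a' b'" "\<not> adj a a'" "\<not> adj b b'"
proof -
  have h: "N w = {c,a,a',b,b'}" "N c = {w,a,a',b,b'}" using assms unfolding block_def by auto
  have "adj w x" if "x \<in> {c,a,a',b,b'}" for x by (rule adjI) (use h that in simp)
  thus "adj w c" "adj w a" "adj w a'" "adj w b" "adj w b'" by simp_all
  have "adj c x" if "x \<in> {a,a',b,b'}" for x by (rule adjI) (use h that in simp)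
  thus "adj c a" "adj c a'" "adj c b" "adj c b'" by simp_all
  show "adj a b" "adj a b'" "adj a' b" "adj a' b'" "\<not> adj a a'" "\<not> adj b b'"
    using assms unfolding block_def by auto
qed

lemma block_ep: "block w c a a' b b' \<Longrightarrow> ep w = 16"
proof -
  assume B: "block w c a a' b b'"
  note A = block_adj[OF B]
  have d: "distinct [c,a,a',b,b']" and Nw: "N w = set [c,a,a',b,b']" using B unfolding block_def by auto
  show ?thesis using ep_list[OF Nw d] A adj_irr adj_sym[of a c] adj_sym[of a' c] adj_sym[of b c] adj_sym[of b' c]
    adj_sym[of a' a] adj_sym[of b a] adj_sym[of b' a] adj_sym[of b a'] adj_sym[of b' a'] adj_sym[of b' b]
    by simp
qed

lemma block_ep_c: "block w c a a' b b' \<Longrightarrow> ep c = 16"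
  using block_ep block_sym(1) by blast

lemma block_port_rel:
  assumes "block w c a a' b b'" "u \<in> {a,a',b,b'}"
  shows "\<exists>u' q q'. block w c u u' q q'"
proof -
  have "u = a \<or> u = a' \<or> u = b \<or> u = b'" using assms(2) by simp
  thus ?thesis using assms(1) block_sym[OF assms(1)] block_sym(2)[OF block_sym(4)[OF assms(1)]] by blast
qed

lemma port:
  assumes B: "block w c a a' b b'"
  obtains y where "N a \<subseteq> {w,c,b,b',y}" "y \<notin> {w,c,a,a',b,b'}" "\<not> adj y w" "\<not> adj y c"
    "ep a = (if adj a y then 10 + 2 * ((if adj y b then 1 else 0) + (if adj y b' then 1 else 0)) else 10)"
proof -
  note A = block_adj[OF B]
  have dist: "distinct [w,c,a,a',b,b']" and Nw: "N w = {c,a,a',b,b'}" and Nc: "N c = {w,a,a',b,b'}"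
    using B unfolding block_def by auto
  have sub: "{w,c,b,b'} \<subseteq> N a" using A by (auto simp: inN adj_sym)
  have c4: "card {w,c,b,b'} = 4" using dist by simp
  let ?R = "N a - {w,c,b,b'}"
  have "card ?R = card (N a) - 4" using sub c4 finN by (simp add: card_Diff_subset)
  hence cR: "card ?R \<le> 1" using degN[of a] by simp
  have "\<exists>y. ?R \<subseteq> {y} \<and> y \<notin> {w,c,a,a',b,b'}"
  proof (cases "?R = {}")
    case True
    obtain y where "y \<notin> {w,c,a,a',b,b'}" using ex_new_if_finite[of "{w,c,a,a',b,b'}"] by auto
    thus ?thesis using True by auto
  next
    case False
    then obtain y where y: "y \<in> ?R" by blast
    have "card ?R \<noteq> 0" using y finN by auto
    hence "card ?R = 1" using cR by simp
    then obtain z where "?R = {z}" by (rule card_1_singletonE)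
    hence "?R = {y}" using y by simp
    moreover have "y \<noteq> a" "y \<noteq> a'" using y adj_irr A(14) by (auto simp: inN adj_sym)
    ultimately show ?thesis using y by auto
  qed
  then obtain y where y: "?R \<subseteq> {y}" "y \<notin> {w,c,a,a',b,b'}" by blast
  have Na: "N a \<subseteq> {w,c,b,b',y}" using y by blast
  have yw: "\<not> adj y w" using y(2) Nw inN by auto
  have yc: "\<not> adj y c" using y(2) Nc inN by auto
  have epa: "ep a = (if adj a y then 10 + 2 * ((if adj y b then 1 else 0) + (if adj y b' then 1 else 0)) else 10)"
  proof (cases "adj a y")
    case True
    hence "N a = set [w,c,b,b',y]" using Na sub by (auto simp: inN adj_sym)
    moreover have "distinct [w,c,b,b',y]" using dist y(2) by auto
    ultimately show ?thesis using ep_list[of a "[w,c,b,b',y]"] True A yw yc adj_irr adj_sym[of c w] adj_sym[of b w]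
      adj_sym[of b' w] adj_sym[of y w] adj_sym[of b c] adj_sym[of b' c] adj_sym[of y c] adj_sym[of b' b]
      adj_sym[of y b] adj_sym[of y b'] by simp
  next
    case False
    hence "N a = set [w,c,b,b']" using Na sub by (auto simp: inN adj_sym)
    moreover have "distinct [w,c,b,b']" using dist by auto
    ultimately show ?thesis using ep_list[of a "[w,c,b,b']"] False A adj_irr adj_sym[of c w] adj_sym[of b w]
      adj_sym[of b' w] adj_sym[of b c] adj_sym[of b' c] adj_sym[of b' b] by simp
  qed
  show ?thesis using that Na y(2) yw yc epa by blast
qed

lemma port_ep: "block w c a a' b b' \<Longrightarrow> ep a \<le> 14"
  by (rule port) auto

lemma block_ports_ep:
  assumes "block w c a a' b b'"
  shows "ep a \<le> 14" "ep a' \<le> 14" "ep b \<le> 14" "ep b' \<le> 14"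
  using port_ep[OF assms] port_ep[OF block_sym(2)[OF assms]] port_ep[OF block_sym(4)[OF assms]]
    port_ep[OF block_sym(2)[OF block_sym(4)[OF assms]]] by auto


lemma Q_nonempty:
  assumes "ep v = 14"
  shows "\<exists>x\<in>N v. card (N x \<inter> N v) \<le> 2"
proof (rule ccontr)
  assume "\<not> ?thesis"
  hence h: "\<forall>x\<in>N v. 3 \<le> card (N x \<inter> N v)" by auto
  have d5: "card (N v) = 5" using ep5 assms by simp
  have "(\<Sum>x\<in>N v. 3) \<le> ep v" unfolding ep_sum by (rule sum_mono) (use h in auto)
  thus False using d5 assms by simp
qed

lemma ext_bound:
  assumes "u \<in> N v" "X \<inter> N v = {}" "v \<notin> X"
  shows "card (N u \<inter> X) + card (N u \<inter> N v) \<le> 4"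
proof -
  have "v \<in> N u" using assms(1) by (simp add: inN adj_sym)
  have "insert v ((N u \<inter> N v) \<union> (N u \<inter> X)) \<subseteq> N u" using \<open>v \<in> N u\<close> by auto
  hence "card (insert v ((N u \<inter> N v) \<union> (N u \<inter> X))) \<le> 5" using degN[of u] finN
    by (meson card_mono le_trans)
  moreover have "v \<notin> (N u \<inter> N v) \<union> (N u \<inter> X)" using assms(3) adj_irr by (auto simp: inN)
  moreover have "card ((N u \<inter> N v) \<union> (N u \<inter> X)) = card (N u \<inter> N v) + card (N u \<inter> X)"
    by (rule card_Un_disjoint) (use assms(2) finN in auto)
  ultimately show ?thesis using finN by simp
qed

lemma Q_light:
  assumes ev: "ep v = 14" and xv: "x \<in> N v" and I2: "card (N x \<inter> N v) \<le> 2"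
  shows "ep x \<le> 10"
proof -
  have d5: "card (N v) = 5" using ep5 ev by simp
  let ?T = "N v - {x}"
  have cT: "card ?T = 4" using d5 xv finN by simp
  have IT: "N x \<inter> N v \<subseteq> ?T" using adj_irr by (auto simp: inN)
  have "card (N x \<inter> N v) \<le> card ?T" using IT finN by (simp add: card_mono)
  have "card (?T - (N x \<inter> N v)) = card ?T - card (N x \<inter> N v)"
    using IT finN by (simp add: card_Diff_subset)
  hence "card (?T - (N x \<inter> N v)) \<ge> 2" using cT I2 by simp
  then obtain r s where rs: "r \<in> ?T - (N x \<inter> N v)" "s \<in> ?T - (N x \<inter> N v)" "r \<noteq> s"
    by (metis card_le_Suc0_iff_eq not_less_eq_eq numeral_2_eq_2 finite_Diff finN)
  have c2: "card (?T - {r,s}) = 2" using cT rs finN by (simp add: card_Diff_subset)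
  then obtain p q where pq: "?T - {r,s} = {p,q}" "p \<noteq> q" by (meson card_2_iff)
  have Nv: "N v = {x,p,q,r,s}" using pq rs xv by auto
  have dist: "distinct [x,p,q,r,s]" using pq rs by auto
  have xr: "\<not> adj x r" "\<not> adj x s" using rs by (auto simp: inN adj_sym)
  have va: "adj v y" if "y \<in> {x,p,q,r,s}" for y by (rule adjI) (use Nv that in simp)
  have ev': "ep v = (\<Sum>a\<leftarrow>[x,p,q,r,s]. \<Sum>z\<leftarrow>[x,p,q,r,s]. if adj a z then 1 else 0)"
    using ep_list[of v "[x,p,q,r,s]"] Nv dist by simp
  hence e7: "(if adj x p then 1 else 0) + (if adj x q then 1 else 0) + (if adj p q then 1 else 0)
     + (if adj p r then 1 else 0) + (if adj p s then 1 else 0) + (if adj q r then 1 else 0)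
     + (if adj q s then 1 else 0) + (if adj r s then 1 else (0::nat)) = 7"
    using ev xr adj_irr adj_sym[of p x] adj_sym[of q x] adj_sym[of r x] adj_sym[of s x] adj_sym[of q p]
      adj_sym[of r p] adj_sym[of s p] adj_sym[of r q] adj_sym[of s q] adj_sym[of s r] by simp
  have noK: "\<not>(adj p q \<and> adj p r \<and> adj p s \<and> adj q r \<and> adj q s \<and> adj r s)"
    using noK5[of v p q r s] va by auto
  have dvp: "card (N p \<inter> N v) = 1 + (if adj p q then 1 else 0) + (if adj p r then 1 else 0) + (if adj p s then 1 else 0)"
    if "adj x p" using cardN_list[of "[x,p,q,r,s]" p] Nv dist that adj_irr adj_sym[of p x] by simp
  have dvq: "card (N q \<inter> N v) = 1 + (if adj p q then 1 else 0) + (if adj q r then 1 else 0) + (if adj q s then 1 else 0)"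
    if "adj x q" using cardN_list[of "[x,p,q,r,s]" q] Nv dist that adj_irr adj_sym[of q x] adj_sym[of q p] by simp
  have vNx: "v \<in> N x" using xv by (simp add: inN adj_sym)
  have Xdisj: "(N x - {v,p,q}) \<inter> N v = {}" using Nv xr adj_irr by (auto simp: inN adj_sym)
  have fX: "finite (N x - {v,p,q})" using finN by simp
  have vX: "v \<notin> N x - {v,p,q}" by simp
  have ecX: "ec (N x - {v,p,q}) \<le> card (N x - {v,p,q}) * (card (N x - {v,p,q}) - 1)"
    by (rule ec_bound[OF fX])
  have vX0: "card (N v \<inter> (N x - {v,p,q})) = 0" using Xdisj by (simp add: Int_commute)
  show ?thesis
  proof (cases "adj x p"; cases "adj x q")
    assume hp: "adj x p" and hq: "adj x q"
    let ?X = "N x - {v,p,q}"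
    have Nx: "N x = set [v,p,q] \<union> ?X" using vNx hp hq by (auto simp: inN adj_sym)
    have dA: "distinct [v,p,q]" using dist va adj_ne by auto
    have "card (set [v,p,q] \<union> ?X) = card (set [v,p,q]) + card ?X"
      by (rule card_Un_disjoint) (use fX in auto)
    hence "card (N x) = 3 + card ?X" using Nx dA by (simp add: distinct_card)
    hence cX: "card ?X \<le> 2" using degN[of x] by simp
    have "card ?X * (card ?X - 1) \<le> 2 * 1" by (rule mult_le_mono) (use cX in auto)
    hence ecX2: "ec ?X \<le> 2" using ecX by simp
    have epx: "ep x = (\<Sum>a\<leftarrow>[v,p,q]. \<Sum>z\<leftarrow>[v,p,q]. if adj a z then 1 else 0)
            + 2 * (\<Sum>a\<leftarrow>[v,p,q]. card (N a \<inter> ?X)) + ec ?X"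
      using ec_split[of "[v,p,q]" ?X] Nx dA fX ep_ec by simp
    have bp: "card (N p \<inter> ?X) + card (N p \<inter> N v) \<le> 4" by (rule ext_bound) (use Nv Xdisj in auto)
    have bq: "card (N q \<inter> ?X) + card (N q \<inter> N v) \<le> 4" by (rule ext_bound) (use Nv Xdisj in auto)
    have "ep x = 4 + 2 * (if adj p q then 1 else 0) + 2 * (card (N p \<inter> ?X) + card (N q \<inter> ?X)) + ec ?X"
      using epx vX0 va adj_irr adj_sym[of p v] adj_sym[of q v] adj_sym[of q p] by simp
    thus ?thesis using bp bq dvp[OF hp] dvq[OF hq] ecX2 e7 hp hq
      by (simp split: if_splits)
  next
    assume hp: "adj x p" and hq: "\<not> adj x q"
    show ?thesis using e7 hp hq noK by (simp split: if_splits)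
  next
    assume hp: "\<not> adj x p" and hq: "adj x q"
    show ?thesis using e7 hp hq noK by (simp split: if_splits)
  next
    assume hp: "\<not> adj x p" and hq: "\<not> adj x q"
    show ?thesis using e7 hp hq by (simp split: if_splits)
  qed
qed


lemma ep_even: "even (ep v)" using ec_even finN ep_ec by simp

lemma ep_le16: "ep v \<le> 16"
proof (rule ccontr)
  assume "\<not> ep v \<le> 16"
  hence g: "ep v \<ge> 16" by simp
  have d5: "card (N v) = 5" using ep5 g by simp
  obtain c where c: "c \<in> N v" "card (N c \<inter> N v) = 4" using univ_vertex[OF g] by blast
  obtain p1 p2 p3 p4 where P: "ep v = 8 + 2 * ((if adj p1 p2 then 1 else 0) + (if adj p1 p3 then 1 else 0) + (if adj p1 p4 then 1 else 0)
       + (if adj p2 p3 then 1 else 0) + (if adj p2 p4 then 1 else 0) + (if adj p3 p4 then 1 else 0))"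
    "\<not>(adj p1 p2 \<and> adj p1 p3 \<and> adj p2 p3)" "\<not>(adj p1 p2 \<and> adj p1 p4 \<and> adj p2 p4)"
    "\<not>(adj p1 p3 \<and> adj p1 p4 \<and> adj p3 p4)" "\<not>(adj p2 p3 \<and> adj p2 p4 \<and> adj p3 p4)"
    using univ_struct[OF d5 c] by metis
  have "(if adj p1 p2 then 1 else 0) + (if adj p1 p3 then 1 else 0) + (if adj p1 p4 then 1 else 0)
       + (if adj p2 p3 then 1 else 0) + (if adj p2 p4 then 1 else 0) + (if adj p3 p4 then 1 else (0::nat)) \<le> 4"
    by (rule tf4[OF P(2-5)])
  thus False using P(1) \<open>\<not> ep v \<le> 16\<close> by simp
qed

definition n8 :: "nat \<Rightarrow> nat" where "n8 u = card {z \<in> N u. ep z = 16}"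

lemma card3_le: "{p,q,r} \<subseteq> S \<Longrightarrow> finite S \<Longrightarrow> distinct [p,q,r] \<Longrightarrow> 3 \<le> card S"
  by (metis card_mono distinct_card list.set(1) list.set(2) list.size(3) list.size(4) numeral_3_eq_3
     add_Suc_right add_0_right One_nat_def)

lemma port_ext:
  assumes B: "block w c a a' b b'" and ax: "adj a x" and xn: "x \<notin> {w,c,b,b'}"
  shows "N a \<subseteq> {w,c,b,b',x}" "x \<notin> {w,c,a,a',b,b'}" "\<not> adj x w" "\<not> adj x c"
    "ep a = 10 + 2 * ((if adj x b then 1 else 0) + (if adj x b' then 1 else 0))"
proof -
  obtain y where y: "N a \<subseteq> {w,c,b,b',y}" "y \<notin> {w,c,a,a',b,b'}" "\<not> adj y w" "\<not> adj y c"
    "ep a = (if adj a y then 10 + 2 * ((if adj y b then 1 else 0) + (if adj y b' then 1 else 0)) else 10)"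
    using port[OF B] by blast
  have "x \<in> N a" using ax by (simp add: inN adj_sym)
  hence xy: "x = y" using y(1) xn by auto
  show "N a \<subseteq> {w,c,b,b',x}" "x \<notin> {w,c,a,a',b,b'}" "\<not> adj x w" "\<not> adj x c"
    "ep a = 10 + 2 * ((if adj x b then 1 else 0) + (if adj x b' then 1 else 0))"
    using y xy ax by auto
qed

lemma port_Q:
  assumes B: "block w c a a' b b'" and ea: "ep a = 14" and xa: "x \<in> N a" and Q: "card (N x \<inter> N a) \<le> 2"
  shows "x \<notin> {w,c,a,a',b,b'}" "adj x b" "adj x b'" "N a = {w,c,b,b',x}" "\<not> adj x w" "\<not> adj x c"
proof -
  note A = block_adj[OF B]
  have dist: "distinct [w,c,a,a',b,b']" using B unfolding block_def by auto
  obtain y where y: "N a \<subseteq> {w,c,b,b',y}" "y \<notin> {w,c,a,a',b,b'}" "\<not> adj y w" "\<not> adj y c"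
    "ep a = (if adj a y then 10 + 2 * ((if adj y b then 1 else 0) + (if adj y b' then 1 else 0)) else 10)"
    using port[OF B] by blast
  have ay: "adj a y" "adj y b" "adj y b'" using y(5) ea by (auto split: if_splits)
  have inNa: "z \<in> N a" if "adj a z" for z using that by (simp add: inN adj_sym)
  have inNa2: "z \<in> N a" if "z \<in> {w,c,b,b',y}" for z
    using that A ay by (auto intro: inNa simp: adj_sym)
  have Na: "N a = {w,c,b,b',y}" using y(1) inNa2 by blast
  have nw: "x \<noteq> w"
  proof
    assume "x = w"
    have "{c,b,b'} \<subseteq> N x \<inter> N a" using \<open>x = w\<close> A inNa2 by (auto simp: inN adj_sym)
    hence "3 \<le> card (N x \<inter> N a)" using card3_le finN dist by (meson distinct_length_2_or_more distinct.simps(2) finite_Int)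
    thus False using Q by simp
  qed
  have nc: "x \<noteq> c"
  proof
    assume "x = c"
    have "{w,b,b'} \<subseteq> N x \<inter> N a" using \<open>x = c\<close> A inNa2 by (auto simp: inN adj_sym)
    moreover have "distinct [w,b,b']" using dist by auto
    ultimately have "3 \<le> card (N x \<inter> N a)" using card3_le finN by (meson finite_Int)
    thus False using Q by simp
  qed
  have nb: "x \<noteq> b"
  proof
    assume "x = b"
    have "{w,c,y} \<subseteq> N x \<inter> N a" using \<open>x = b\<close> A ay inNa2 by (auto simp: inN adj_sym)
    moreover have "distinct [w,c,y]" using dist y(2) by auto
    ultimately have "3 \<le> card (N x \<inter> N a)" using card3_le finN by (meson finite_Int)
    thus False using Q by simp
  qed
  have nb': "x \<noteq> b'"
  proof
    assume "x = b'"
    have "{w,c,y} \<subseteq> N x \<inter> N a" using \<open>x = b'\<close> A ay inNa2 by (auto simp: inN adj_sym)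
    moreover have "distinct [w,c,y]" using dist y(2) by auto
    ultimately have "3 \<le> card (N x \<inter> N a)" using card3_le finN by (meson finite_Int)
    thus False using Q by simp
  qed
  have "x = y" using xa Na nw nc nb nb' by auto
  thus "x \<notin> {w,c,a,a',b,b'}" "adj x b" "adj x b'" "N a = {w,c,b,b',x}" "\<not> adj x w" "\<not> adj x c"
    using y ay Na by auto
qed

lemma n8_le3: "n8 u \<le> 3"
proof (cases "\<exists>z\<in>N u. ep z = 16")
  case False
  have e: "{z \<in> N u. ep z = 16} = {}" using False by blast
  show ?thesis unfolding n8_def e by simp
next
  case True
  then obtain z where z: "z \<in> N u" "ep z = 16" by blast
  obtain c a a' b b' where B: "block z c a a' b b'" using S8[OF z(2)] by blast
  have "u \<in> N z" using z(1) by (simp add: inN adj_sym)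
  hence uin: "u \<in> {c,a,a',b,b'}" using B unfolding block_def by auto
  show ?thesis
  proof (cases "u = c")
    case True
    have Nc: "N u = {z,a,a',b,b'}" using B True unfolding block_def by auto
    have "{x \<in> N u. ep x = 16} \<subseteq> {z}" using Nc block_ports_ep[OF B] by auto
    hence "card {x \<in> N u. ep x = 16} \<le> 1" by (metis card_mono card.empty card_insert_disjoint finite.emptyI
        finite.insertI insert_absorb insert_not_empty is_singletonI is_singleton_altdef)
    thus ?thesis unfolding n8_def by simp
  next
    case False
    hence "u \<in> {a,a',b,b'}" using uin by simp
    then obtain u' q q' where B2: "block z c u u' q q'" using block_port_rel[OF B] by blast
    obtain y where y: "N u \<subseteq> {z,c,q,q',y}" using port[OF B2] by blast
    have "{x \<in> N u. ep x = 16} \<subseteq> {z,c,y}" using y block_ports_ep[OF B2] by auto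
    hence "card {x \<in> N u. ep x = 16} \<le> card {z,c,y}" by (simp add: card_mono)
    also have "\<dots> \<le> 3" by (simp add: card_insert_le_m1)
    finally show ?thesis unfolding n8_def by simp
  qed
qed

lemma port_n8:
  assumes B: "block w c p p' r r'" and px: "adj p x" and xn: "x \<notin> {w,c,r,r'}" and ex: "ep x \<noteq> 16"
  shows "n8 p \<le> 2"
proof -
  have Np: "N p \<subseteq> {w,c,r,r',x}" using port_ext[OF B px xn] by blast
  have "{z \<in> N p. ep z = 16} \<subseteq> {w,c}" using Np block_ports_ep[OF B] ex by auto
  hence "card {z \<in> N p. ep z = 16} \<le> card {w,c}" by (simp add: card_mono)
  also have "\<dots> \<le> 2" by (simp add: card_insert_le_m1)
  finally show ?thesis unfolding n8_def by simp
qed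

lemma iso_ep:
  assumes xz: "x \<in> N z" and dis: "N x \<inter> N z = {}"
  shows "ep z \<le> 12"
proof -
  have "ep z = (\<Sum>u\<in>N z. card (N u \<inter> N z))" by (rule ep_sum)
  also have "\<dots> = card (N x \<inter> N z) + (\<Sum>u\<in>N z - {x}. card (N u \<inter> N z))"
    using xz finN by (simp add: sum.remove)
  also have "\<dots> \<le> 0 + (\<Sum>u\<in>N z - {x}. 3)"
  proof (intro add_mono sum_mono)
    show "card (N x \<inter> N z) \<le> 0" using dis by simp
    fix u assume u: "u \<in> N z - {x}"
    have "x \<notin> N u"
    proof
      assume "x \<in> N u"
      hence "u \<in> N x" by (simp add: inN adj_sym)
      thus False using u dis by blast
    qed
    hence "N u \<inter> N z \<subseteq> N z - {u,x}" using adj_irr by (auto simp: inN)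
    hence "card (N u \<inter> N z) \<le> card (N z - {u,x})" using finN by (simp add: card_mono)
    also have "\<dots> = card (N z) - 2" using u xz finN by (simp add: card_Diff_subset)
    finally show "card (N u \<inter> N z) \<le> 3" using degN[of z] by simp
  qed
  also have "\<dots> = 3 * (card (N z) - 1)" using xz finN by simp
  also have "\<dots> \<le> 12" using degN[of z] by simp
  finally show ?thesis .
qed


definition amt :: "nat \<Rightarrow> nat \<Rightarrow> nat" where
  "amt y x = (if adj y x \<and> ep y = 16 \<and> ep x \<noteq> 16 then 4 else 0)
     + (if adj y x \<and> ep y = 14 \<and> card (N x \<inter> N y) \<le> 2 then 2 + 4 * n8 y else 0)"

lemma amt_zero: "\<not> adj y x \<Longrightarrow> amt y x = 0" by (simp add: amt_def)

lemma amt_16: "ep y = 16 \<Longrightarrow> amt y x \<le> 4" by (simp add: amt_def)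

lemma amt_le: "amt y x \<le> 14" using n8_le3[of y] by (simp add: amt_def)

lemma amt_n16: "ep y \<noteq> 16 \<Longrightarrow> amt y x = (if adj y x \<and> ep y = 14 \<and> card (N x \<inter> N y) \<le> 2 then 2 + 4 * n8 y else 0)"
  by (simp add: amt_def)

lemma amt_no14: "ep y \<noteq> 16 \<Longrightarrow> ep y \<noteq> 14 \<Longrightarrow> amt y x = 0" by (simp add: amt_def)

lemma sum_sub_le:
  fixes f :: "nat \<Rightarrow> nat"
  assumes "A \<subseteq> B" "finite B"
  shows "sum f A \<le> sum f B"
  using assms by (simp add: sum_mono2)

lemma recv_C1:
  assumes ex: "ep x \<le> 10" and wx: "w \<in> N x" and ew: "ep w = 16"
  shows "(\<Sum>z\<in>N x. amt z x) \<le> 22"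
proof -
  obtain c a a' b b' where B: "block w c a a' b b'" using S8[OF ew] by blast
  have "x \<in> N w" using wx by (simp add: inN adj_sym)
  hence "x \<in> {c,a,a',b,b'}" using B unfolding block_def by auto
  moreover have "x \<noteq> c" using block_ep_c[OF B] ex by auto
  ultimately have "x \<in> {a,a',b,b'}" by simp
  then obtain x' q q' where B2: "block w c x x' q q'" using block_port_rel[OF B] by blast
  obtain y where y: "N x \<subseteq> {w,c,q,q',y}" "y \<notin> {w,c,x,x',q,q'}" using port[OF B2] by blast
  have dist: "distinct [w,c,q,q',y]" using B2 y(2) unfolding block_def by auto
  have q0: "amt q x = 0"
  proof -
    have B3: "block w c q q' x x'" using block_sym(4)[OF B2] .
    have "ep q \<noteq> 16" using block_ports_ep[OF B2] by simp
    moreover have "\<not> (adj q x \<and> ep q = 14 \<and> card (N x \<inter> N q) \<le> 2)"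
    proof
      assume h: "adj q x \<and> ep q = 14 \<and> card (N x \<inter> N q) \<le> 2"
      hence "x \<in> N q" by (simp add: inN adj_sym)
      thus False using port_Q(1)[OF B3] h by auto
    qed
    ultimately show ?thesis by (simp add: amt_def)
  qed
  have q0': "amt q' x = 0"
  proof -
    have B3: "block w c q' q x x'" using block_sym(2)[OF block_sym(4)[OF B2]] .
    have "ep q' \<noteq> 16" using block_ports_ep[OF B2] by simp
    moreover have "\<not> (adj q' x \<and> ep q' = 14 \<and> card (N x \<inter> N q') \<le> 2)"
    proof
      assume h: "adj q' x \<and> ep q' = 14 \<and> card (N x \<inter> N q') \<le> 2"
      hence "x \<in> N q'" by (simp add: inN adj_sym)
      thus False using port_Q(1)[OF B3] h by auto
    qed
    ultimately show ?thesis by (simp add: amt_def)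
  qed
  have "(\<Sum>z\<in>N x. amt z x) \<le> (\<Sum>z\<in>set [w,c,q,q',y]. amt z x)"
    by (rule sum_sub_le) (use y in auto)
  also have "\<dots> = amt w x + amt c x + amt q x + amt q' x + amt y x"
    using dist by (simp add: sum_set_list)
  also have "\<dots> \<le> 4 + 4 + 0 + 0 + 14"
    using amt_16[OF ew, of x] amt_16[OF block_ep_c[OF B2], of x] q0 q0' amt_le[of y x] by linarith
  finally show ?thesis by simp
qed


lemma port_of_16:
  assumes "ep y \<noteq> 16" "w \<in> N y" "ep w = 16"
  obtains c y' q q' where "block w c y y' q q'"
proof -
  obtain c a a' b b' where B: "block w c a a' b b'" using S8[OF assms(3)] by blast
  have "y \<in> N w" using assms(2) by (simp add: inN adj_sym)
  hence "y \<in> {c,a,a',b,b'}" using B unfolding block_def by auto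
  moreover have "y \<noteq> c" using block_ep_c[OF B] assms(1) by auto
  ultimately have "y \<in> {a,a',b,b'}" by simp
  thus ?thesis using block_port_rel[OF B] that by blast
qed

lemma sum_split_sub:
  fixes f :: "nat \<Rightarrow> nat"
  assumes "P \<subseteq> S" "finite S"
  shows "sum f S = sum f P + sum f (S - P)"
  using assms by (metis sum.subset_diff add.commute)

lemma recv_C2a_i:
  assumes ex: "ep x \<le> 10" and no16: "\<forall>w\<in>N x. ep w \<noteq> 16"
    and B: "block w c y y' q q'" and Ny: "N y = {w,c,q,q',x}" and xo: "x \<notin> {w,c,y,y',q,q'}"
    and xq: "adj x q" "adj x q'" and xw: "\<not> adj x w" "\<not> adj x c" and xy': "adj x y'"
  shows "7 * ep x + (\<Sum>z\<in>N x. amt z x) \<le> 96"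
proof -
  note A = block_adj[OF B]
  have dist: "distinct [w,c,y,y',q,q']" using B unfolding block_def by auto
  have "x \<in> N y" using Ny by simp
  hence xy: "adj x y" by (simp add: inN)
  have Ny': "N y' \<subseteq> {w,c,q,q',x}" using port_ext(1)[OF block_sym(2)[OF B]] xy' xo by (auto simp: adj_sym)
  have Nq: "N q \<subseteq> {w,c,y,y',x}" using port_ext(1)[OF block_sym(4)[OF B]] xq xo by (auto simp: adj_sym)
  have Nq': "N q' \<subseteq> {w,c,y,y',x}" using port_ext(1)[OF block_sym(2)[OF block_sym(4)[OF B]]] xq xo
    by (auto simp: adj_sym)
  let ?P = "{y,y',q,q'}"
  let ?R = "N x - ?P"
  have PN: "?P \<subseteq> N x" using xy xy' xq by (auto simp: inN adj_sym)
  have cP: "card ?P = 4" using dist by simp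
  have cR: "card ?R \<le> 1" using PN cP degN[of x] finN by (simp add: card_Diff_subset)
  have key: "\<not> adj p z" if "z \<in> ?R" "p \<in> ?P" for z p
  proof
    assume pz: "adj p z"
    have "z \<in> N p" using pz by (simp add: inN adj_sym)
    hence "z \<in> {w,c,y,y',q,q',x}" using that(2) Ny Ny' Nq Nq' by auto
    moreover have "adj z x" using that(1) by (simp add: inN)
    ultimately show False using that(1) xw adj_irr by (auto simp: adj_sym)
  qed
  have amtP: "amt p x \<le> 10" if "p \<in> ?P" for p
  proof -
    have ep16: "ep p \<noteq> 16" using block_ports_ep[OF B] that by auto
    have "n8 p \<le> 2"
    proof -
      have "p = y \<or> p = y' \<or> p = q \<or> p = q'" using that by simp
      moreover have "n8 y \<le> 2" by (rule port_n8[OF B]) (use xy xo ex in \<open>auto simp: adj_sym\<close>)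
      moreover have "n8 y' \<le> 2" by (rule port_n8[OF block_sym(2)[OF B]]) (use xy' xo ex in \<open>auto simp: adj_sym\<close>)
      moreover have "n8 q \<le> 2" by (rule port_n8[OF block_sym(4)[OF B]]) (use xq xo ex in \<open>auto simp: adj_sym\<close>)
      moreover have "n8 q' \<le> 2" by (rule port_n8[OF block_sym(2)[OF block_sym(4)[OF B]]])
          (use xq xo ex in \<open>auto simp: adj_sym\<close>)
      ultimately show ?thesis by blast
    qed
    thus ?thesis using amt_n16[OF ep16, of x] by simp
  qed
  have amtR: "amt z x = 0" if "z \<in> ?R" for z
  proof -
    have "N x \<inter> N z = {}"
    proof (rule ccontr)
      assume "N x \<inter> N z \<noteq> {}"
      then obtain u where u: "u \<in> N x" "u \<in> N z" by blast
      show False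
      proof (cases "u \<in> ?P")
        case True thus False using key[OF that True] u(2) by (simp add: inN adj_sym)
      next
        case False
        hence "u \<in> ?R" using u by simp
        hence "u = z" using that cR finN by (metis card_le_Suc0_iff_eq finite_Diff le_numeral_extra(4) One_nat_def)
        thus False using u(2) adj_irr by (simp add: inN)
      qed
    qed
    moreover have "x \<in> N z" using that by (simp add: inN adj_sym)
    ultimately have "ep z \<le> 12" using iso_ep by blast
    moreover have "ep z \<noteq> 16" using no16 that by auto
    ultimately show ?thesis using amt_no14 by simp
  qed
  have "(\<Sum>z\<in>N x. amt z x) = (\<Sum>z\<in>?P. amt z x) + (\<Sum>z\<in>?R. amt z x)"
    using sum_split_sub[OF PN finN] .
  also have "(\<Sum>z\<in>?R. amt z x) = 0" using amtR by simp
  also have "(\<Sum>z\<in>?P. amt z x) \<le> (\<Sum>z\<in>?P. 10)" by (rule sum_mono) (use amtP in auto)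
  also have "\<dots> = 40" using cP by simp
  finally have S: "(\<Sum>z\<in>N x. amt z x) \<le> 40" by simp
  have NxE: "N x = set [y,y',q,q'] \<union> ?R" using PN by auto
  have epx: "ep x = (\<Sum>a\<leftarrow>[y,y',q,q']. \<Sum>z\<leftarrow>[y,y',q,q']. if adj a z then 1 else 0)
            + 2 * (\<Sum>a\<leftarrow>[y,y',q,q']. card (N a \<inter> ?R)) + ec ?R"
    using ec_split[of "[y,y',q,q']" ?R] NxE dist finN ep_ec by simp
  have cNR: "card (N a \<inter> ?R) = 0" if "a \<in> ?P" for a
  proof -
    have "z \<notin> N a" if "z \<in> ?R" for z using key[OF that \<open>a \<in> ?P\<close>] by (simp add: inN adj_sym)
    hence "N a \<inter> ?R = {}" by blast
    thus ?thesis by simp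
  qed
  have ecR: "ec ?R = 0" using ec_bound[of ?R] cR finN by (metis finite_Diff le_zero_eq mult_is_0 diff_is_0_eq)
  have "ep x = 8" using epx cNR ecR A adj_irr adj_sym[of y' y] adj_sym[of q y] adj_sym[of q' y]
      adj_sym[of q y'] adj_sym[of q' y'] adj_sym[of q' q] by simp
  thus ?thesis using S by simp
qed


lemma recv_C2a_ii:
  assumes ex: "ep x \<le> 10" and no16: "\<forall>w\<in>N x. ep w \<noteq> 16"
    and B: "block w c y y' q q'" and Ny: "N y = {w,c,q,q',x}" and xo: "x \<notin> {w,c,y,y',q,q'}"
    and xq: "adj x q" "adj x q'" and xw: "\<not> adj x w" "\<not> adj x c" and xy': "\<not> adj x y'"
  shows "7 * ep x + (\<Sum>z\<in>N x. amt z x) \<le> 96"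
proof -
  note A = block_adj[OF B]
  have dist: "distinct [w,c,y,y',q,q']" using B unfolding block_def by auto
  have "x \<in> N y" using Ny by simp
  hence xy: "adj x y" by (simp add: inN)
  have Bq: "block w c q q' y y'" using block_sym(4)[OF B] .
  have Bq': "block w c q' q y y'" using block_sym(2)[OF block_sym(4)[OF B]] .
  have Nq: "N q \<subseteq> {w,c,y,y',x}" using port_ext(1)[OF Bq] xq xo by (auto simp: adj_sym)
  have Nq': "N q' \<subseteq> {w,c,y,y',x}" using port_ext(1)[OF Bq'] xq xo by (auto simp: adj_sym)
  have epq: "ep q = 12" using port_ext(5)[OF Bq] xq xo xy xy' by (auto simp: adj_sym)
  have epq': "ep q' = 12" using port_ext(5)[OF Bq'] xq xo xy xy' by (auto simp: adj_sym)
  have Nw: "N w = {c,y,y',q,q'}" and Nc: "N c = {w,y,y',q,q'}" using B unfolding block_def by auto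
  let ?P = "{y,q,q'}"
  let ?R = "N x - ?P"
  have PN: "?P \<subseteq> N x" using xy xq by (auto simp: inN adj_sym)
  have cP: "card ?P = 3" using dist by simp
  have cR: "card ?R \<le> 2" using PN cP degN[of x] finN by (simp add: card_Diff_subset)
  have amty: "amt y x \<le> 10"
  proof -
    have "n8 y \<le> 2" by (rule port_n8[OF B]) (use xy xo ex in \<open>auto simp: adj_sym\<close>)
    moreover have "ep y \<noteq> 16" using block_ports_ep[OF B] by simp
    ultimately show ?thesis using amt_n16[of y x] by simp
  qed
  have amtq: "amt q x = 0" "amt q' x = 0" using amt_no14 epq epq' by auto
  have amtR: "amt z x \<le> 2" if zR: "z \<in> ?R" for z
  proof (rule ccontr)
    assume "\<not> amt z x \<le> 2"
    moreover have ez: "ep z \<noteq> 16" using no16 zR by auto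
    ultimately have h: "adj z x" "ep z = 14" "card (N x \<inter> N z) \<le> 2" "n8 z \<noteq> 0"
      using amt_n16[OF ez, of x] by (auto split: if_splits)
    have "{u \<in> N z. ep u = 16} \<noteq> {}" using h(4) unfolding n8_def by (metis card.empty)
    then obtain w2 where w2: "w2 \<in> N z" "ep w2 = 16" by blast
    obtain c2 z2 m m' where B2: "block w2 c2 z z2 m m'" using port_of_16[OF ez w2] by blast
    have xz: "x \<in> N z" using h(1) by (simp add: inN adj_sym)
    note Q2 = port_Q[OF B2 h(2) xz h(3)]
    have dist2: "distinct [w2,c2,z,z2,m,m']" using B2 unfolding block_def by auto
    have mN: "m \<in> N x" "m' \<in> N x" using Q2(2,3) by (auto simp: inN adj_sym)
    have "m \<in> ?P \<or> m' \<in> ?P"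
    proof (rule ccontr)
      assume "\<not> (m \<in> ?P \<or> m' \<in> ?P)"
      hence "{z,m,m'} \<subseteq> ?R" using mN zR by auto
      hence "3 \<le> card ?R" using card3_le[of z m m' ?R] dist2 finN by auto
      thus False using cR by simp
    qed
    then obtain m0 where m0: "m0 \<in> ?P" "adj m0 w2"
      using block_adj(4,5)[OF B2] adj_sym by blast
    have Nm0: "N m0 \<subseteq> {w,c,y,y',q,q',x}" using m0(1) Ny Nq Nq' by auto
    have "w2 \<in> N m0" using m0(2) by (simp add: inN adj_sym)
    hence "w2 \<in> {w,c,y,y',q,q',x}" using Nm0 by auto
    moreover have "ep w2 \<noteq> ep y" "ep w2 \<noteq> ep y'" "ep w2 \<noteq> ep q" "ep w2 \<noteq> ep q'" "ep w2 \<noteq> ep x"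
      using w2(2) block_ports_ep[OF B] ex by auto
    ultimately have "w2 = w \<or> w2 = c" by auto
    moreover have "z \<in> N w2" using w2(1) by (simp add: inN adj_sym)
    ultimately have "z \<in> {w,c,y,y',q,q'}" using Nw Nc by auto
    moreover have "z \<notin> ?P" using zR by simp
    ultimately show False using h(1) xw xy' by (auto simp: adj_sym)
  qed
  have "(\<Sum>z\<in>N x. amt z x) = (\<Sum>z\<in>?P. amt z x) + (\<Sum>z\<in>?R. amt z x)"
    using sum_split_sub[OF PN finN] .
  also have "(\<Sum>z\<in>?P. amt z x) = amt y x + amt q x + amt q' x"
    using dist by (simp add: sum_set_list)
  also have "(\<Sum>z\<in>?R. amt z x) \<le> (\<Sum>z\<in>?R. 2)" by (rule sum_mono) (use amtR in auto)
  also have "\<dots> \<le> 4" using cR by simp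
  finally have "(\<Sum>z\<in>N x. amt z x) \<le> 14" using amty amtq by simp
  thus ?thesis using ex by simp
qed


lemma recv:
  assumes ex: "ep x \<le> 10"
  shows "7 * ep x + (\<Sum>z\<in>N x. amt z x) \<le> 96"
proof (cases "\<exists>w\<in>N x. ep w = 16")
  case True
  then obtain w where "w \<in> N x" "ep w = 16" by blast
  from recv_C1[OF ex this] show ?thesis using ex by simp
next
  case False
  hence no16: "\<forall>w\<in>N x. ep w \<noteq> 16" by blast
  show ?thesis
  proof (cases "\<exists>y\<in>N x. ep y = 14 \<and> card (N x \<inter> N y) \<le> 2 \<and> n8 y \<noteq> 0")
    case True
    then obtain y where y: "y \<in> N x" "ep y = 14" "card (N x \<inter> N y) \<le> 2" "n8 y \<noteq> 0" by blast
    have "{u \<in> N y. ep u = 16} \<noteq> {}" using y(4) unfolding n8_def by (metis card.empty)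
    then obtain w where w: "w \<in> N y" "ep w = 16" by blast
    have ey: "ep y \<noteq> 16" using y by simp
    obtain c y' q q' where B: "block w c y y' q q'" using port_of_16[OF ey w] by blast
    have xy: "x \<in> N y" using y(1) by (simp add: inN adj_sym)
    note Q = port_Q[OF B y(2) xy y(3)]
    show ?thesis
    proof (cases "adj x y'")
      case True
      show ?thesis by (rule recv_C2a_i[OF ex no16 B Q(4) Q(1) Q(2) Q(3) Q(5) Q(6) True])
    next
      case False
      show ?thesis by (rule recv_C2a_ii[OF ex no16 B Q(4) Q(1) Q(2) Q(3) Q(5) Q(6) False])
    qed
  next
    case False
    have "amt z x \<le> 2" if z: "z \<in> N x" for z
    proof -
      have ez: "ep z \<noteq> 16" using no16 z by auto
      show ?thesis using amt_n16[OF ez, of x] False z by auto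
    qed
    hence "(\<Sum>z\<in>N x. amt z x) \<le> (\<Sum>z\<in>N x. 2)" by (intro sum_mono) auto
    also have "\<dots> \<le> 10" using degN[of x] by simp
    finally show ?thesis using ex by simp
  qed
qed

lemma in_heavy:
  assumes "ep x > 10" "z \<in> N x"
  shows "amt z x = (if ep z = 16 \<and> ep x \<noteq> 16 then 4 else 0)"
proof -
  have "\<not> (adj z x \<and> ep z = 14 \<and> card (N x \<inter> N z) \<le> 2)"
  proof
    assume h: "adj z x \<and> ep z = 14 \<and> card (N x \<inter> N z) \<le> 2"
    hence "x \<in> N z" by (simp add: inN adj_sym)
    hence "ep x \<le> 10" using Q_light h by blast
    thus False using assms by simp
  qed
  thus ?thesis using assms(2) by (simp add: amt_def inN)
qed

lemma vertex_ineq: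
  "7 * ep x + (\<Sum>z\<in>N x. amt z x) \<le> 96 + (\<Sum>z\<in>N x. amt x z)"
proof -
  have le16: "ep x \<le> 16" by (rule ep_le16)
  have ev: "even (ep x)" by (rule ep_even)
  show ?thesis
  proof (cases "ep x \<le> 10")
    case True thus ?thesis using recv by fastforce
  next
    case False
    hence gt: "ep x > 10" by simp
    have In: "(\<Sum>z\<in>N x. amt z x) = (\<Sum>z\<in>N x. if ep z = 16 \<and> ep x \<noteq> 16 then 4 else 0)"
      using in_heavy[OF gt] by simp
    obtain k where k: "ep x = 2 * k" using ev by (auto elim: evenE)
    have "ep x = 12 \<or> ep x = 14 \<or> ep x = 16" using gt le16 unfolding k by presburger
    moreover
    { assume e16: "ep x = 16"
      have In0: "(\<Sum>z\<in>N x. amt z x) = 0" using In e16 by simp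
      obtain c a a' b b' where B: "block x c a a' b b'" using S8[OF e16] by blast
      have sub: "{a,a',b,b'} \<subseteq> N x" using B unfolding block_def by auto
      have d: "distinct [a,a',b,b']" using B unfolding block_def by auto
      have A: "adj x a" "adj x a'" "adj x b" "adj x b'" using block_adj[OF B] by auto
      have pe: "ep a \<noteq> 16" "ep a' \<noteq> 16" "ep b \<noteq> 16" "ep b' \<noteq> 16" using block_ports_ep[OF B] by auto
      have "(\<Sum>z\<in>{a,a',b,b'}. amt x z) \<le> (\<Sum>z\<in>N x. amt x z)" by (rule sum_sub_le[OF sub finN])
      moreover have "(\<Sum>z\<in>{a,a',b,b'}. amt x z) = amt x a + amt x a' + amt x b + amt x b'"
        using d by simp
      moreover have "amt x p \<ge> 4" if "adj x p" "ep p \<noteq> 16" for p using that e16 by (simp add: amt_def)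
      hence "amt x a \<ge> 4" "amt x a' \<ge> 4" "amt x b \<ge> 4" "amt x b' \<ge> 4" using A pe by auto
      ultimately have "(\<Sum>z\<in>N x. amt x z) \<ge> 16" by linarith
      hence ?thesis using In0 e16 by simp }
    moreover
    { assume e: "ep x = 12 \<or> ep x = 14"
      have "(\<Sum>z\<in>N x. amt z x) = (\<Sum>z\<in>N x. if ep z = 16 then 4 else 0)" using In e by auto
      also have "\<dots> = (\<Sum>z\<in>{z \<in> N x. ep z = 16}. 4)" using sum.inter_filter[OF finN[of x], of "\<lambda>z. 4::nat" "\<lambda>z. ep z = 16"] by simp
      also have "\<dots> = 4 * n8 x" unfolding n8_def by simp
      finally have In4: "(\<Sum>z\<in>N x. amt z x) = 4 * n8 x" .
      { assume e12: "ep x = 12"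
        hence ?thesis using In4 n8_le3[of x] by simp }
      moreover
      { assume e14: "ep x = 14"
        obtain q where q: "q \<in> N x" "card (N q \<inter> N x) \<le> 2" using Q_nonempty[OF e14] by blast
        have "amt x q = 2 + 4 * n8 x" using q e14 by (simp add: amt_def inN adj_sym)
        moreover have "amt x q \<le> (\<Sum>z\<in>N x. amt x z)" by (rule member_le_sum[OF q(1) _ finN]) simp
        ultimately have ?thesis using In4 e14 by simp }
      ultimately have ?thesis using e by blast }
    ultimately show ?thesis by blast
  qed
qed


lemma sum_in_V: "(\<Sum>z\<in>V. amt z x) = (\<Sum>z\<in>N x. amt z x)"
  by (rule sum.mono_neutral_right[OF finV]) (auto simp: N_def amt_zero)

lemma sum_out_V: "(\<Sum>z\<in>V. amt x z) = (\<Sum>z\<in>N x. amt x z)"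
  by (rule sum.mono_neutral_right[OF finV]) (auto simp: N_def amt_zero adj_sym)

lemma global_ineq: "7 * (\<Sum>v\<in>V. ep v) \<le> 96 * card V"
proof -
  have "(\<Sum>x\<in>V. 7 * ep x + (\<Sum>z\<in>V. amt z x)) \<le> (\<Sum>x\<in>V. 96 + (\<Sum>z\<in>V. amt x z))"
    by (rule sum_mono) (simp add: sum_in_V sum_out_V vertex_ineq)
  hence "7 * (\<Sum>v\<in>V. ep v) + (\<Sum>x\<in>V. \<Sum>z\<in>V. amt z x) \<le> 96 * card V + (\<Sum>x\<in>V. \<Sum>z\<in>V. amt x z)"
    by (simp add: sum.distrib sum_distrib_left)
  moreover have "(\<Sum>x\<in>V. \<Sum>z\<in>V. amt x z) = (\<Sum>x\<in>V. \<Sum>z\<in>V. amt z x)" by (rule sum.swap)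
  ultimately show ?thesis by simp
qed

lemma fiber6:
  assumes "adj x y" "adj x z" "adj y z"
  shows "card {(v,a,b). v \<in> V \<and> a \<in> N v \<and> b \<in> N v \<and> adj a b \<and> {v,a,b} = {x,y,z}} = 6"
proof -
  have d: "x \<noteq> y" "x \<noteq> z" "y \<noteq> z" using assms adj_ne by auto
  have V: "x \<in> V" "y \<in> V" "z \<in> V" using assms adj_V by auto
  have eq: "{(v,a,b). v \<in> V \<and> a \<in> N v \<and> b \<in> N v \<and> adj a b \<and> {v,a,b} = {x,y,z}}
      = {(x,y,z),(x,z,y),(y,x,z),(y,z,x),(z,x,y),(z,y,x)}"
  proof
    show "{(v,a,b). v \<in> V \<and> a \<in> N v \<and> b \<in> N v \<and> adj a b \<and> {v,a,b} = {x,y,z}}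
      \<subseteq> {(x,y,z),(x,z,y),(y,x,z),(y,z,x),(z,x,y),(z,y,x)}"
    proof
      fix t assume "t \<in> {(v,a,b). v \<in> V \<and> a \<in> N v \<and> b \<in> N v \<and> adj a b \<and> {v,a,b} = {x,y,z}}"
      then obtain v a b where t: "t = (v,a,b)" and h: "v \<in> V" "a \<in> N v" "b \<in> N v" "adj a b" "{v,a,b} = {x,y,z}"
        by auto
      have ne: "v \<noteq> a" "v \<noteq> b" "a \<noteq> b" using h adj_ne by (auto simp: inN)
      have m: "v \<in> {x,y,z}" "a \<in> {x,y,z}" "b \<in> {x,y,z}" using h(5) by blast+
      show "t \<in> {(x,y,z),(x,z,y),(y,x,z),(y,z,x),(z,x,y),(z,y,x)}"
        using m ne t by auto
    qed
  next
    show "{(x,y,z),(x,z,y),(y,x,z),(y,z,x),(z,x,y),(z,y,x)}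
      \<subseteq> {(v,a,b). v \<in> V \<and> a \<in> N v \<and> b \<in> N v \<and> adj a b \<and> {v,a,b} = {x,y,z}}"
      using assms V by (auto simp: inN adj_sym insert_commute)
  qed
  show ?thesis unfolding eq using d by simp
qed

lemma tri_count: "(\<Sum>v\<in>V. ep v) = 6 * k_count 3 V E"
proof -
  let ?T = "Sigma V (\<lambda>v. {(a,b). a \<in> N v \<and> b \<in> N v \<and> adj a b})"
  let ?K = "{S. is_clique V E S \<and> card S = 3}"
  let ?F = "\<lambda>S. {(v,a,b). v \<in> V \<and> a \<in> N v \<and> b \<in> N v \<and> adj a b \<and> {v,a,b} = S}"
  have fin2: "finite {(a,b). a \<in> N v \<and> b \<in> N v \<and> adj a b}" for v
    by (rule finite_subset[of _ "N v \<times> N v"]) (auto simp: finN)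
  have cT: "card ?T = (\<Sum>v\<in>V. ep v)" using finV fin2 by (simp add: ep_def)
  have finK: "finite ?K"
    by (rule finite_subset[of _ "Pow V"]) (auto simp: is_clique_def finV)
  have cl: "is_clique V E S \<longleftrightarrow> S \<subseteq> V \<and> (\<forall>u\<in>S. \<forall>v\<in>S. u \<noteq> v \<longrightarrow> adj u v)" for S
    by (simp add: is_clique_def adj_def)
  have TU: "?T = (\<Union>S\<in>?K. ?F S)"
  proof
    show "?T \<subseteq> (\<Union>S\<in>?K. ?F S)"
    proof
      fix t assume "t \<in> ?T"
      then obtain v a b where t: "t = (v,a,b)" and h: "v \<in> V" "a \<in> N v" "b \<in> N v" "adj a b" by auto
      hence h2: "adj a v" "adj b v" "adj a b" by (auto simp: inN)
      have "is_clique V E {v,a,b}" unfolding cl using h2 adj_V by (auto simp: adj_sym)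
      moreover have "a \<noteq> v" "b \<noteq> v" "a \<noteq> b" using h2 adj_ne by auto
      hence "card {v,a,b} = 3" by simp
      ultimately show "t \<in> (\<Union>S\<in>?K. ?F S)" using h t \<open>card {v,a,b} = 3\<close> by blast
    qed
  next
    show "(\<Union>S\<in>?K. ?F S) \<subseteq> ?T" by auto
  qed
  have "card ?T = (\<Sum>S\<in>?K. card (?F S))"
    unfolding TU
  proof (rule card_UN_disjoint[OF finK])
    show "\<forall>S\<in>?K. finite (?F S)"
    proof
      fix S show "finite (?F S)"
        by (rule finite_subset[of _ "V \<times> (V \<times> V)"]) (auto simp: finV inN dest: adj_V)
    qed
    show "\<forall>S\<in>?K. \<forall>S'\<in>?K. S \<noteq> S' \<longrightarrow> ?F S \<inter> ?F S' = {}" by blast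
  qed
  also have "\<dots> = (\<Sum>S\<in>?K. 6)"
  proof (rule sum.cong[OF refl])
    fix S assume "S \<in> ?K"
    hence S: "is_clique V E S" "card S = 3" by auto
    then obtain x y z where xyz: "S = {x,y,z}" "x \<noteq> y" "y \<noteq> z" "x \<noteq> z" by (metis card_3_iff)
    have "adj x y" "adj x z" "adj y z" using S(1) xyz unfolding cl by auto
    thus "card (?F S) = 6" using fiber6 xyz(1) by simp
  qed
  also have "\<dots> = 6 * card ?K" by simp
  finally show ?thesis using cT unfolding k_count_def by simp
qed

lemma main_bound: "7 * k_count 3 V E \<le> 16 * card V"
  using global_ineq tri_count by simp

end

lemma rho_bound:
  assumes "graph_class 5 4 V E" "card V \<ge> 1"
  shows "rho 3 V E \<le> 16 / 7"
proof -
  interpret sg V E using assms(1) by unfold_locales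
  have "7 * k_count 3 V E \<le> 16 * card V" by (rule main_bound)
  hence "7 * real (k_count 3 V E) \<le> 16 * real (card V)" by (metis of_nat_le_iff of_nat_mult of_nat_numeral)
  moreover have "real (card V) > 0" using assms(2) by simp
  ultimately show ?thesis unfolding rho_def by (simp add: divide_le_eq field_simps)
qed


definition gadj :: "nat \<Rightarrow> nat \<Rightarrow> bool" where
  "gadj u v \<longleftrightarrow> u \<noteq> v \<and> u \<le> 6 \<and> v \<le> 6 \<and> {u,v} \<noteq> {0,1} \<and> {u,v} \<noteq> {2,3} \<and> {u,v} \<noteq> {4,6} \<and> {u,v} \<noteq> {5,6}"

lemma le6: "(u::nat) \<le> 6 \<Longrightarrow> u = 0 \<or> u = 1 \<or> u = 2 \<or> u = 3 \<or> u = 4 \<or> u = 5 \<or> u = 6" by auto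

lemma Gstar_E_iff: "{u,v} \<in> Gstar_E \<longleftrightarrow> gadj u v"
proof
  assume "{u,v} \<in> Gstar_E"
  have "(\<exists>a b. {u,v} = {a,b} \<and> a \<in> {0..5} \<and> b \<in> {0..5} \<and> a \<noteq> b \<and> {a,b} \<noteq> {0,1} \<and> {a,b} \<noteq> {2,3})
     \<or> (\<exists>w. {u,v} = {6,w} \<and> w \<in> {0,1,2,3})"
    using \<open>{u,v} \<in> Gstar_E\<close> unfolding Gstar_E_def Un_iff mem_Collect_eq .
  thus "gadj u v"
  proof (elim disjE exE conjE)
    fix a b assume a: "{u,v} = {a,b}" "a \<in> {0..5}" "b \<in> {0..5}" "a \<noteq> b" "{a,b} \<noteq> {0,1}" "{a,b} \<noteq> {2,3}"
    have uv: "u \<in> {a,b}" "v \<in> {a,b}" using a(1) by blast+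
    have ne: "u \<noteq> v"
    proof
      assume "u = v"
      hence "{a,b} = {u}" using a(1) by simp
      hence "a \<in> {u}" "b \<in> {u}" by blast+
      thus False using a(4) by simp
    qed
    have "6 \<notin> {u,v}" using uv a(2,3) by auto
    hence "{u,v} \<noteq> {4,6}" "{u,v} \<noteq> {5,6}" by (metis insertI1 insert_commute)+
    moreover have "u \<le> 6" "v \<le> 6" using uv a(2,3) by auto
    ultimately show ?thesis unfolding gadj_def using ne a(1,5,6) by simp
  next
    fix w assume b: "{u,v} = {6,w}" "w \<in> {0,1,2,3}"
    have uv: "u \<in> {6,w}" "v \<in> {6,w}" using b(1) by blast+
    have ne: "u \<noteq> v"
    proof
      assume "u = v"
      hence "{6,w} = {u}" using b(1) by simp
      hence "6 \<in> {u}" "w \<in> {u}" by blast+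
      thus False using b(2) by auto
    qed
    have w: "w \<le> 3" using b(2) by auto
    have "6 \<in> {u,v}" using b(1) by simp
    have "{u,v} \<noteq> {0,1}"
    proof
      assume "{u,v} = {0,1}" hence "(6::nat) \<in> {0,1}" using \<open>6 \<in> {u,v}\<close> by simp
      thus False by simp
    qed
    moreover have "{u,v} \<noteq> {2,3}"
    proof
      assume "{u,v} = {2,3}" hence "(6::nat) \<in> {2,3}" using \<open>6 \<in> {u,v}\<close> by simp
      thus False by simp
    qed
    moreover have "4 \<notin> {u,v}" "5 \<notin> {u,v}" using b(1) w by auto
    hence "{u,v} \<noteq> {4,6}" "{u,v} \<noteq> {5,6}" by (metis insertI1)+
    moreover have "u \<le> 6" "v \<le> 6" using uv w by auto
    ultimately show ?thesis unfolding gadj_def using ne by simp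
  qed
next
  assume g: "gadj u v"
  have gg: "u \<noteq> v \<and> u \<le> 6 \<and> v \<le> 6 \<and> {u,v} \<noteq> {0,1} \<and> {u,v} \<noteq> {2,3} \<and> {u,v} \<noteq> {4,6} \<and> {u,v} \<noteq> {5,6}"
    using g unfolding gadj_def .
  have u6: "u \<le> 6" "v \<le> 6" "u \<noteq> v" using gg by simp_all
  have n1: "{u,v} \<noteq> {0,1}" using gg by (elim conjE) assumption
  have n2: "{u,v} \<noteq> {2,3}" using gg by (elim conjE) assumption
  have n3: "{u,v} \<noteq> {4,6}" using gg by (elim conjE) assumption
  have n4: "{u,v} \<noteq> {5,6}" using gg by (elim conjE) assumption
  note n = n1 n2 n3 n4
  show "{u,v} \<in> Gstar_E"
  proof (cases "u \<le> 5 \<and> v \<le> 5")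
    case True
    have "{u,v} \<in> {{a, b} | a b. a \<in> {0..5} \<and> b \<in> {0..5} \<and> a \<noteq> b \<and> {a, b} \<noteq> {0, 1} \<and> {a, b} \<noteq> {2, 3}}"
      unfolding mem_Collect_eq
      by (rule exI[of _ u], rule exI[of _ v]) (intro conjI refl; use True u6 n in simp)
    thus ?thesis unfolding Gstar_E_def by (rule UnI1)
  next
    case False
    hence "u = 6 \<or> v = 6" using u6 by auto
    hence "\<exists>w. {u,v} = {6,w} \<and> w \<in> {0,1,2,3}"
    proof
      assume "u = 6"
      have "v \<noteq> 4"
      proof
        assume "v = 4" hence "{u,v} = {4,6}" using \<open>u = 6\<close> by (simp add: insert_commute)
        thus False using n(3) by simp
      qed
      moreover have "v \<noteq> 5"
      proof
        assume "v = 5" hence "{u,v} = {5,6}" using \<open>u = 6\<close> by (simp add: insert_commute)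
        thus False using n(4) by simp
      qed
      moreover have "v \<noteq> 6" using u6(3) \<open>u = 6\<close> by simp
      ultimately have "v \<in> {0,1,2,3}" using le6[OF u6(2)] by auto
      thus ?thesis using \<open>u = 6\<close> by blast
    next
      assume "v = 6"
      have "u \<noteq> 4"
      proof
        assume "u = 4" hence "{u,v} = {4,6}" using \<open>v = 6\<close> by simp
        thus False using n(3) by simp
      qed
      moreover have "u \<noteq> 5"
      proof
        assume "u = 5" hence "{u,v} = {5,6}" using \<open>v = 6\<close> by simp
        thus False using n(4) by simp
      qed
      moreover have "u \<noteq> 6" using u6(3) \<open>v = 6\<close> by simp
      ultimately have "u \<in> {0,1,2,3}" using le6[OF u6(1)] by auto
      thus ?thesis using \<open>v = 6\<close> by (metis insert_commute)
    qed
    hence "{u,v} \<in> {{6, w} | w. w \<in> {0, 1, 2, 3}}" by simp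
    thus ?thesis unfolding Gstar_E_def by (rule UnI2)
  qed
qed

lemma Gstar_simple: "simple_graph Gstar_V Gstar_E"
proof -
  have "e \<subseteq> {0..6} \<and> card e = 2" if eE: "e \<in> Gstar_E" for e
  proof -
    have "(\<exists>a b. e = {a,b} \<and> a \<in> {0..5} \<and> b \<in> {0..5} \<and> a \<noteq> b \<and> {a,b} \<noteq> {0,1} \<and> {a,b} \<noteq> {2,3})
     \<or> (\<exists>w. e = {6,w} \<and> w \<in> {0,1,2,3})"
      using eE unfolding Gstar_E_def Un_iff mem_Collect_eq .
    thus ?thesis
    proof (elim disjE exE conjE)
      fix a b assume "e = {a,b}" "a \<in> {0..5}" "b \<in> {0..5}" "a \<noteq> b"
      thus ?thesis by simp
    next
      fix w assume "e = {6,w}" "w \<in> {0,1,2,3}"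
      thus ?thesis by auto
    qed
  qed
  thus ?thesis unfolding simple_graph_def Gstar_V_def by simp
qed

lemma Gstar_N: "{u \<in> Gstar_V. {u,v} \<in> Gstar_E} = {u. u \<le> 6 \<and> gadj u v}"
  unfolding Gstar_V_def Gstar_E_iff by auto

lemma N7: "{u. u \<le> 6 \<and> gadj u v} = {u \<in> {0,1,2,3,4,5,6}. gadj u v}"
  using le6 by fastforce

lemma filt: "{u \<in> insert a A. P u} = (if P a then insert a {u \<in> A. P u} else {u \<in> A. P u})" by auto

lemma Gstar_N_explicit:
  "{u. u \<le> 6 \<and> gadj u 0} = {2,3,4,5,6}" "{u. u \<le> 6 \<and> gadj u 1} = {2,3,4,5,6}"
  "{u. u \<le> 6 \<and> gadj u 2} = {0,1,4,5,6}" "{u. u \<le> 6 \<and> gadj u 3} = {0,1,4,5,6}"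
  "{u. u \<le> 6 \<and> gadj u 4} = {0,1,2,3,5}" "{u. u \<le> 6 \<and> gadj u 5} = {0,1,2,3,4}"
  "{u. u \<le> 6 \<and> gadj u 6} = {0,1,2,3}"
  unfolding N7 filt by (simp_all add: gadj_def doubleton_eq_iff)

lemma Gstar_deg: "max_degree_le Gstar_V Gstar_E 5"
  unfolding max_degree_le_def degree_def Gstar_N
proof
  fix v assume "v \<in> Gstar_V"
  hence "v \<le> 6" by (simp add: Gstar_V_def)
  hence "v = 0 \<or> v = 1 \<or> v = 2 \<or> v = 3 \<or> v = 4 \<or> v = 5 \<or> v = 6" by (rule le6)
  thus "card {u. u \<le> 6 \<and> gadj u v} \<le> 5"
    by (elim disjE) (simp_all only: Gstar_N_explicit, simp_all)
qed

lemma Gstar_clique: "clique_number_le Gstar_V Gstar_E 4"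
  unfolding clique_number_le_def
proof (intro allI impI)
  fix S assume c: "is_clique Gstar_V Gstar_E S"
  hence S6: "\<forall>u\<in>S. u \<le> 6" and adjS: "\<forall>u\<in>S. \<forall>v\<in>S. u \<noteq> v \<longrightarrow> gadj u v"
    unfolding is_clique_def Gstar_V_def Gstar_E_iff by auto
  define f :: "nat \<Rightarrow> nat" where "f u = (if u \<le> 1 then 0 else if u \<le> 3 then 1 else if u = 5 then 3 else 2)" for u
  have "inj_on f S"
  proof (rule inj_onI)
    fix u v assume uv: "u \<in> S" "v \<in> S" "f u = f v"
    show "u = v"
    proof (rule ccontr)
      assume ne: "u \<noteq> v"
      hence g: "gadj u v" using adjS uv by auto
      have "u \<le> 6" "v \<le> 6" using S6 uv by auto
      hence U: "u = 0 \<or> u = 1 \<or> u = 2 \<or> u = 3 \<or> u = 4 \<or> u = 5 \<or> u = 6"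
        and W: "v = 0 \<or> v = 1 \<or> v = 2 \<or> v = 3 \<or> v = 4 \<or> v = 5 \<or> v = 6" using le6 by blast+
      show False using U W g uv(3) ne
        by (elim disjE) (simp_all add: f_def gadj_def doubleton_eq_iff)
    qed
  qed
  moreover have "f ` S \<subseteq> {0,1,2,3}" unfolding f_def by auto
  ultimately have "card S \<le> card {0::nat,1,2,3}" by (meson card_inj_on_le finite.emptyI finite_insert)
  thus "card S \<le> 4" by simp
qed

lemma Gstar_class: "graph_class 5 4 Gstar_V Gstar_E"
  unfolding graph_class_def using Gstar_simple Gstar_deg Gstar_clique by simp

lemma Gstar_k: "k_count 3 Gstar_V Gstar_E = 16"
proof -
  interpret G: sg Gstar_V Gstar_E by unfold_locales (rule Gstar_class)
  have NG: "G.N v = {u. u \<le> 6 \<and> gadj u v}" for v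
    unfolding G.N_def G.adj_def using Gstar_N by simp
  have ad: "G.adj u v = gadj u v" for u v by (simp add: G.adj_def Gstar_E_iff)
  have e0: "G.ep 0 = 14" using G.ep_list[of 0 "[2,3,4,5,6]"] NG Gstar_N_explicit by (simp add: ad gadj_def doubleton_eq_iff)
  have e1: "G.ep 1 = 14" using G.ep_list[of 1 "[2,3,4,5,6]"] NG Gstar_N_explicit by (simp add: ad gadj_def doubleton_eq_iff)
  have e2: "G.ep 2 = 14" using G.ep_list[of 2 "[0,1,4,5,6]"] NG Gstar_N_explicit by (simp add: ad gadj_def doubleton_eq_iff)
  have e3: "G.ep 3 = 14" using G.ep_list[of 3 "[0,1,4,5,6]"] NG Gstar_N_explicit by (simp add: ad gadj_def doubleton_eq_iff)
  have e4: "G.ep 4 = 16" using G.ep_list[of 4 "[0,1,2,3,5]"] NG Gstar_N_explicit by (simp add: ad gadj_def doubleton_eq_iff)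
  have e5: "G.ep 5 = 16" using G.ep_list[of 5 "[0,1,2,3,4]"] NG Gstar_N_explicit by (simp add: ad gadj_def doubleton_eq_iff)
  have e6: "G.ep 6 = 8" using G.ep_list[of 6 "[0,1,2,3]"] NG Gstar_N_explicit by (simp add: ad gadj_def doubleton_eq_iff)
  have VV: "Gstar_V = {0,1,2,3,4,5,6}" unfolding Gstar_V_def by auto
  have "(\<Sum>v\<in>Gstar_V. G.ep v) = G.ep 0 + G.ep 1 + G.ep 2 + G.ep 3 + G.ep 4 + G.ep 5 + G.ep 6"
    unfolding VV by simp
  hence "(\<Sum>v\<in>Gstar_V. G.ep v) = 96" using e0 e1 e2 e3 e4 e5 e6 by simp
  thus ?thesis using G.tri_count by simp
qed

theorem mainTheorem19:
  shows "graph_class 5 4 Gstar_V Gstar_E \<and> f_sup 3 5 4 = 16 / 7 \<and> rho 3 Gstar_V Gstar_E = 16 / 7"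
proof -
  have cV: "card Gstar_V = 7" unfolding Gstar_V_def by simp
  have r: "rho 3 Gstar_V Gstar_E = 16 / 7" unfolding rho_def using Gstar_k cV by simp
  have "Sup {rho 3 V E | V E. graph_class 5 4 V E \<and> card V \<ge> 1} = 16 / 7"
  proof (rule cSup_eq_maximum)
    show "16 / 7 \<in> {rho 3 V E | V E. graph_class 5 4 V E \<and> card V \<ge> 1}"
      using r Gstar_class cV by (metis (mono_tags, lifting) mem_Collect_eq one_le_numeral)
    fix x assume "x \<in> {rho 3 V E | V E. graph_class 5 4 V E \<and> card V \<ge> 1}"
    then obtain V E where "x = rho 3 V E" "graph_class 5 4 V E" "card V \<ge> 1" by blast
    thus "x \<le> 16 / 7" using rho_bound by simp
  qed
  thus ?thesis using r Gstar_class unfolding f_sup_def by simp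
qed

end
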